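(* Let $n,k,m\ge1$ be integers, and let $r_0<r_1<\dots<r_{k-1}$ and $s_0<s_1<\dots<s_{k-1}$ be integers in $\{1,\dots,k+m\}$. Let $\bar r_0<\dots<\bar r_{m-1}$ and $\bar s_0<\dots<\bar s_{m-1}$ be the elements of $\{1,\dots,k+m\}\setminus\{r_0,\dots,r_{k-1}\}$ and $\{1,\dots,k+m\}\setminus\{s_0,\dots,s_{k-1}\}$ respectively. Then $$\det\Big(C_{2n-1}^{(2k+2m-1)}(2r_i-2\to2s_j-1)\Big)_{0\le i,j\le k-1}=(-1)^{\sum_{i=0}^{m-1}(\bar r_i+\bar s_i)}\det\Big(C_{-2n+1}^{(2k+2m-1)}(2\bar r_i-2\to2\bar s_j-1)\Big)_{0\le i,j\le m-1}.$$
   Context: For $N\ge0$ and $0\le r,s\le K$, $C_N^{(K)}(r\to s)$ is the number of lattice paths with steps $(1,1),(1,-1)$ from $(0,r)$ to $(N,s)$ never below the $x$-axis nor above $y=K$. For odd $K$, $F(x)=\sum_{N\ge0}C_N^{(K)}(r\to s)x^N$ is a rational function $p/q$ with $\deg p<\deg q$, $q(0)\ne0$, and for negative $N$ one defines $C_N^{(K)}(r\to s)$ by $\sum_{N\ge1}C_{-N}^{(K)}(r\to s)x^N=-F(1/x)$ (equivalently by running the linear recurrence backwards). *)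

theory Defs
  imports "HOL-Computational_Algebra.Polynomial_FPS" "Jordan_Normal_Form.Determinant"
begin

text \<open>Number of lattice paths with steps (1,1),(1,-1) from (0,r) to (N,s) staying in the
  strip 0 <= y <= K.  A path is encoded by its list of heights y_0,...,y_N (natural numbers,
  hence never below the x-axis).\<close>
definition paths_count :: "nat \<Rightarrow> nat \<Rightarrow> nat \<Rightarrow> nat \<Rightarrow> nat" where
  "paths_count K N r s = card {ys :: nat list. length ys = Suc N \<and> ys ! 0 = r \<and> ys ! N = s \<and>
      (\<forall>y\<in>set ys. y \<le> K) \<and>
      (\<forall>i<N. ys ! (Suc i) = ys ! i + 1 \<or> ys ! i = ys ! (Suc i) + 1)}"

definition path_gf :: "nat \<Rightarrow> nat \<Rightarrow> nat \<Rightarrow> real fps" where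
  "path_gf K r s = Abs_fps (\<lambda>N. real (paths_count K N r s))"

text \<open>A representation F = p/q with deg p < deg q and q(0) \<noteq> 0 (exists for odd K).\<close>
definition rat_rep :: "nat \<Rightarrow> nat \<Rightarrow> nat \<Rightarrow> real poly \<times> real poly" where
  "rat_rep K r s = (SOME (p, q). poly q 0 \<noteq> 0 \<and> degree p < degree q \<and>
      fps_of_poly q * path_gf K r s = fps_of_poly p)"

text \<open>The power series -F(1/x) = -(x^(deg q - deg p) * reflect p) / reflect q, where
  reflect q = x^(deg q) q(1/x).\<close>
definition neg_gf :: "nat \<Rightarrow> nat \<Rightarrow> nat \<Rightarrow> real fps" where
  "neg_gf K r s = (case rat_rep K r s of (p, q) \<Rightarrow>
      - fps_of_poly (monom 1 (degree q - degree p) * reflect_poly p) / fps_of_poly (reflect_poly q))"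

definition C :: "nat \<Rightarrow> int \<Rightarrow> nat \<Rightarrow> nat \<Rightarrow> real" where
  "C K N r s = (if 0 \<le> N then real (paths_count K (nat N) r s)
                else fps_nth (neg_gf K r s) (nat (- N)))"

end

theory Submission
  imports Defs
begin

type_synonym rm = "nat \<Rightarrow> nat \<Rightarrow> real"

definition mm :: "nat \<Rightarrow> rm \<Rightarrow> rm \<Rightarrow> rm" where
  "mm D X Y = (\<lambda>i j. if i < D \<and> j < D then (\<Sum>l<D. X i l * Y l j) else 0)"

definition Idm :: "nat \<Rightarrow> rm" where
  "Idm D = (\<lambda>i j. if i = j \<and> i < D then 1 else 0)"

definition supp :: "nat \<Rightarrow> rm \<Rightarrow> bool" where
  "supp D X \<longleftrightarrow> (\<forall>i j. D \<le> i \<or> D \<le> j \<longrightarrow> X i j = 0)"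

primrec pw :: "nat \<Rightarrow> rm \<Rightarrow> nat \<Rightarrow> rm" where
  "pw D X 0 = Idm D"
| "pw D X (Suc t) = mm D (pw D X t) X"

definition Ad :: "nat \<Rightarrow> rm" where
  "Ad D = (\<lambda>i j. if i < D \<and> j < D \<and> (i = Suc j \<or> j = Suc i) then 1 else 0)"

lemma supp_mm[simp]: "supp D (mm D X Y)"
  by (auto simp: supp_def mm_def)

lemma supp_Idm[simp]: "supp D (Idm D)"
  by (auto simp: supp_def Idm_def)

lemma supp_Ad[simp]: "supp D (Ad D)"
  by (auto simp: supp_def Ad_def)

lemma supp_pw[simp]: "supp D (pw D X t)"
  by (cases t) auto

lemma mm_assoc: "mm D (mm D X Y) Z = mm D X (mm D Y Z)"
proof (intro ext)
  fix i j
  show "mm D (mm D X Y) Z i j = mm D X (mm D Y Z) i j"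
  proof (cases "i < D \<and> j < D")
    case True
    have "(\<Sum>l<D. (\<Sum>l'<D. X i l' * Y l' l) * Z l j) = (\<Sum>l<D. \<Sum>l'<D. X i l' * Y l' l * Z l j)"
      by (simp add: sum_distrib_right)
    also have "\<dots> = (\<Sum>l'<D. \<Sum>l<D. X i l' * Y l' l * Z l j)" by (rule sum.swap)
    also have "\<dots> = (\<Sum>l'<D. X i l' * (\<Sum>l<D. Y l' l * Z l j))"
      by (simp add: sum_distrib_left mult.assoc)
    finally have e: "(\<Sum>l<D. (\<Sum>l'<D. X i l' * Y l' l) * Z l j) = (\<Sum>l'<D. X i l' * (\<Sum>l<D. Y l' l * Z l j))" .
    have "mm D (mm D X Y) Z i j = (\<Sum>l<D. (\<Sum>l'<D. X i l' * Y l' l) * Z l j)"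
      using True unfolding mm_def by (auto intro!: sum.cong)
    moreover have "mm D X (mm D Y Z) i j = (\<Sum>l'<D. X i l' * (\<Sum>l<D. Y l' l * Z l j))"
      using True unfolding mm_def by (auto intro!: sum.cong)
    ultimately show ?thesis using e by simp
  qed (auto simp: mm_def)
qed

lemma if01_mult: "(if c then 1 else 0) * (x::real) = (if c then x else 0)"
  "x * (if c then 1 else 0) = (if c then x else 0)" by auto

lemma mm_Idm_left: "supp D X \<Longrightarrow> mm D (Idm D) X = X"
  unfolding mm_def Idm_def supp_def
  by (intro ext) (auto simp: if01_mult)

lemma mm_Idm_right: "supp D X \<Longrightarrow> mm D X (Idm D) = X"
  unfolding mm_def Idm_def supp_def
  by (intro ext) (auto simp: if01_mult)

lemma pw_add: "pw D X (a + b) = mm D (pw D X a) (pw D X b)"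
  by (induction b) (simp_all add: mm_Idm_right mm_assoc)

lemma pw_Suc_left: "supp D X \<Longrightarrow> pw D X (Suc t) = mm D X (pw D X t)"
  using pw_add[of D X 1 t] by (simp add: mm_Idm_left)

lemma pw_mm_comm: "mm D (pw D X a) (pw D X b) = mm D (pw D X b) (pw D X a)"
  by (metis pw_add add.commute)


definition PS :: "nat \<Rightarrow> nat \<Rightarrow> nat \<Rightarrow> nat \<Rightarrow> nat list set" where
  "PS K N r s = {ys :: nat list. length ys = Suc N \<and> ys ! 0 = r \<and> ys ! N = s \<and>
      (\<forall>y\<in>set ys. y \<le> K) \<and>
      (\<forall>i<N. ys ! (Suc i) = ys ! i + 1 \<or> ys ! i = ys ! (Suc i) + 1)}"

lemma paths_count_PS: "paths_count K N r s = card (PS K N r s)"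
  unfolding paths_count_def PS_def ..

lemma finite_PS: "finite (PS K N r s)"
proof -
  have "PS K N r s \<subseteq> {ys. set ys \<subseteq> {..K} \<and> length ys = Suc N}"
    unfolding PS_def by auto
  moreover have "finite {ys. set ys \<subseteq> {..K} \<and> length ys = Suc N}"
    by (rule finite_lists_length_eq) simp
  ultimately show ?thesis by (rule finite_subset)
qed

lemma PS_0: "PS K 0 r s = (if r = s \<and> r \<le> K then {[r]} else {})"
proof -
  have "ys \<in> PS K 0 r s \<longleftrightarrow> (r = s \<and> r \<le> K \<and> ys = [r])" for ys
  proof
    assume "ys \<in> PS K 0 r s"
    then have "length ys = 1" "ys ! 0 = r" "ys ! 0 = s" "\<forall>y\<in>set ys. y \<le> K" unfolding PS_def by auto
    then show "r = s \<and> r \<le> K \<and> ys = [r]"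
      by (cases ys) auto
  qed (auto simp: PS_def)
  then show ?thesis by auto
qed

lemma PS_Suc: "s \<le> K \<Longrightarrow> PS K (Suc N) r s =
   (\<Union>t\<in>{t\<in>{..<Suc K}. s = Suc t \<or> t = Suc s}. (\<lambda>ys. ys @ [s]) ` PS K N r t)"
proof (intro equalityI subsetI)
  assume sK: "s \<le> K"
  fix ys assume "ys \<in> PS K (Suc N) r s"
  then have L: "length ys = Suc (Suc N)" and h0: "ys ! 0 = r" and hN: "ys ! Suc N = s"
    and hK: "\<forall>y\<in>set ys. y \<le> K"
    and st: "\<forall>i<Suc N. ys ! (Suc i) = ys ! i + 1 \<or> ys ! i = ys ! (Suc i) + 1"
    unfolding PS_def by auto
  define zs where "zs = butlast ys"
  have ys: "ys = zs @ [s]"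
    using L hN unfolding zs_def
    by (metis append_butlast_last_id diff_Suc_1 last_conv_nth length_0_conv nat.distinct(1))
  have Lz: "length zs = Suc N" using L by (simp add: zs_def)
  have nz: "\<And>i. i < Suc N \<Longrightarrow> zs ! i = ys ! i" using Lz ys by (simp add: nth_append)
  define t where "t = zs ! N"
  have "t \<in> set ys" unfolding t_def ys using Lz by (simp add: nth_append)
  then have tK: "t \<le> K" using hK by auto
  have adj: "s = Suc t \<or> t = Suc s" using st[rule_format, of N] nz[of N] hN unfolding t_def by auto
  have stz: "\<forall>i<N. zs ! (Suc i) = zs ! i + 1 \<or> zs ! i = zs ! (Suc i) + 1"
  proof (intro allI impI)
    fix i assume "i < N"
    then show "zs ! (Suc i) = zs ! i + 1 \<or> zs ! i = zs ! (Suc i) + 1"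
      using st[rule_format, of i] nz[of i] nz[of "Suc i"] by simp
  qed
  have "\<forall>y\<in>set zs. y \<le> K" using hK ys by auto
  moreover have "zs ! 0 = r" using nz[of 0] h0 by simp
  ultimately have "zs \<in> PS K N r t"
    unfolding PS_def using Lz stz t_def by auto
  show "ys \<in> (\<Union>t\<in>{t\<in>{..<Suc K}. s = Suc t \<or> t = Suc s}. (\<lambda>ys. ys @ [s]) ` PS K N r t)"
  proof (rule UN_I)
    show "t \<in> {t\<in>{..<Suc K}. s = Suc t \<or> t = Suc s}" using tK adj by auto
    show "ys \<in> (\<lambda>ys. ys @ [s]) ` PS K N r t" using ys \<open>zs \<in> PS K N r t\<close> by blast
  qed
next
  assume sK: "s \<le> K"
  fix ys assume "ys \<in> (\<Union>t\<in>{t\<in>{..<Suc K}. s = Suc t \<or> t = Suc s}. (\<lambda>ys. ys @ [s]) ` PS K N r t)"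
  then obtain t zs where t: "t \<le> K" "s = Suc t \<or> t = Suc s" and zs: "zs \<in> PS K N r t"
    and ys: "ys = zs @ [s]" by (auto simp del: lessThan_iff simp: lessThan_def less_Suc_eq_le)
  from zs have Lz: "length zs = Suc N" and h0: "zs ! 0 = r" and hN: "zs ! N = t"
    and hK: "\<forall>y\<in>set zs. y \<le> K"
    and st: "\<forall>i<N. zs ! (Suc i) = zs ! i + 1 \<or> zs ! i = zs ! (Suc i) + 1"
    unfolding PS_def by auto
  show "ys \<in> PS K (Suc N) r s"
    unfolding PS_def
  proof (intro CollectI conjI ballI allI impI)
    show "length ys = Suc (Suc N)" using Lz ys by simp
    show "ys ! 0 = r" using Lz ys h0 by (simp add: nth_append)
    show "ys ! Suc N = s" using Lz ys by (simp add: nth_append)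
    show "y \<le> K" if "y \<in> set ys" for y using that ys hK sK by auto
    show "ys ! Suc i = ys ! i + 1 \<or> ys ! i = ys ! Suc i + 1" if "i < Suc N" for i
    proof (cases "i < N")
      case True then show ?thesis using st Lz ys by (simp add: nth_append)
    next
      case False then have "i = N" using that by simp
      then show ?thesis using Lz ys hN t by (auto simp: nth_append)
    qed
  qed
qed

lemma card_PS_Suc: assumes "s \<le> K"
  shows "card (PS K (Suc N) r s) = (\<Sum>t\<in>{t\<in>{..<Suc K}. s = Suc t \<or> t = Suc s}. card (PS K N r t))"
proof -
  have "card (PS K (Suc N) r s) = (\<Sum>t\<in>{t\<in>{..<Suc K}. s = Suc t \<or> t = Suc s}. card ((\<lambda>ys. ys @ [s]) ` PS K N r t))"
    unfolding PS_Suc[OF assms]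
  proof (rule card_UN_disjoint)
    show "finite {t \<in> {..<Suc K}. s = Suc t \<or> t = Suc s}" by simp
    show "\<forall>i\<in>{t \<in> {..<Suc K}. s = Suc t \<or> t = Suc s}. finite ((\<lambda>ys. ys @ [s]) ` PS K N r i)"
      using finite_PS by blast
    show "\<forall>i\<in>{t \<in> {..<Suc K}. s = Suc t \<or> t = Suc s}. \<forall>j\<in>{t \<in> {..<Suc K}. s = Suc t \<or> t = Suc s}.
       i \<noteq> j \<longrightarrow> (\<lambda>ys. ys @ [s]) ` PS K N r i \<inter> (\<lambda>ys. ys @ [s]) ` PS K N r j = {}"
      by (auto simp: PS_def)
  qed
  also have "\<dots> = (\<Sum>t\<in>{t\<in>{..<Suc K}. s = Suc t \<or> t = Suc s}. card (PS K N r t))"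
    by (intro sum.cong refl card_image) (auto simp: inj_on_def)
  finally show ?thesis .
qed

lemma paths_pw: "r < Suc K \<Longrightarrow> s < Suc K \<Longrightarrow> real (paths_count K N r s) = pw (Suc K) (Ad (Suc K)) N r s"
proof (induction N arbitrary: s)
  case 0
  then show ?case by (simp add: paths_count_PS PS_0 Idm_def)
next
  case (Suc N)
  have "real (paths_count K (Suc N) r s) = (\<Sum>t\<in>{t\<in>{..<Suc K}. s = Suc t \<or> t = Suc s}. real (card (PS K N r t)))"
    using Suc.prems by (simp add: paths_count_PS card_PS_Suc)
  also have "\<dots> = (\<Sum>t\<in>{t\<in>{..<Suc K}. s = Suc t \<or> t = Suc s}. pw (Suc K) (Ad (Suc K)) N r t)"
    using Suc.IH Suc.prems by (intro sum.cong refl) (auto simp: paths_count_PS)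
  also have "\<dots> = (\<Sum>t<Suc K. pw (Suc K) (Ad (Suc K)) N r t * Ad (Suc K) t s)"
    unfolding sum.inter_filter[OF finite_lessThan]
    using Suc.prems by (intro sum.cong refl) (auto simp: Ad_def)
  also have "\<dots> = pw (Suc K) (Ad (Suc K)) (Suc N) r s"
    using Suc.prems by (simp add: mm_def)
  finally show ?case .
qed


definition W :: "nat \<Rightarrow> rm" where
  "W D = (\<lambda>i j. if i < D \<and> j < D \<and> odd (i + j) \<and> (odd i \<longleftrightarrow> j < i) then (-1) ^ ((i + j - 1) div 2) else 0)"

lemma supp_W[simp]: "supp D (W D)" by (auto simp: supp_def W_def)

lemma sum_two_delta:
  fixes g :: "nat \<Rightarrow> real"
  assumes "\<And>l. \<not> (P l \<and> Q l)"
  shows "(\<Sum>l\<in>S. if P l \<or> Q l then g l else 0) = (\<Sum>l\<in>S. if P l then g l else 0) + (\<Sum>l\<in>S. if Q l then g l else 0)"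
  unfolding sum.distrib[symmetric] using assms by (intro sum.cong) auto

lemma mm_Ad_left: assumes "i < D" "j < D"
  shows "mm D (Ad D) X i j = (if 0 < i then X (i - 1) j else 0) + (if Suc i < D then X (Suc i) j else 0)"
proof -
  have "mm D (Ad D) X i j = (\<Sum>l<D. if l = i - 1 \<and> 0 < i \<or> l = Suc i then X l j else 0)"
    using assms unfolding mm_def Ad_def by (auto intro!: sum.cong)
  also have "\<dots> = (\<Sum>l<D. if l = i - 1 \<and> 0 < i then X l j else 0) + (\<Sum>l<D. if l = Suc i then X l j else 0)"
    by (rule sum_two_delta) auto
  also have "\<dots> = (if 0 < i then X (i - 1) j else 0) + (if Suc i < D then X (Suc i) j else 0)"
    using assms by (auto simp: sum.delta' cong: if_cong)
  finally show ?thesis .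
qed

lemma mm_Ad_right: assumes "i < D" "j < D"
  shows "mm D X (Ad D) i j = (if 0 < j then X i (j - 1) else 0) + (if Suc j < D then X i (Suc j) else 0)"
proof -
  have "mm D X (Ad D) i j = (\<Sum>l<D. if l = j - 1 \<and> 0 < j \<or> l = Suc j then X i l else 0)"
    using assms unfolding mm_def Ad_def by (auto intro!: sum.cong)
  also have "\<dots> = (\<Sum>l<D. if l = j - 1 \<and> 0 < j then X i l else 0) + (\<Sum>l<D. if l = Suc j then X i l else 0)"
    by (rule sum_two_delta) auto
  also have "\<dots> = (if 0 < j then X i (j - 1) else 0) + (if Suc j < D then X i (Suc j) else 0)"
    using assms by (auto simp: sum.delta' cong: if_cong)
  finally show ?thesis .
qed

lemma AW: assumes "even D" shows "mm D (Ad D) (W D) = Idm D"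
proof (intro ext)
  fix i j
  show "mm D (Ad D) (W D) i j = Idm D i j"
  proof (cases "i < D \<and> j < D")
    case False then show ?thesis by (auto simp: mm_def Idm_def)
  next
    case True
    then have ij: "i < D" "j < D" by auto
    show ?thesis unfolding mm_Ad_left[OF ij]
    proof (cases "even i")
      case ei: True
      then obtain a where a: "i = 2 * a" by (auto elim: evenE)
      have sD: "Suc i < D" using ij ei assms by (metis Suc_lessI even_Suc)
      show "(if 0 < i then W D (i - 1) j else 0) + (if Suc i < D then W D (Suc i) j else 0) = Idm D i j"
      proof (cases "even j")
        case ej: True
        then obtain b where b: "j = 2 * b" by (auto elim: evenE)
        show ?thesis
        proof (cases "b < a")
          case True
          then obtain c where c: "a = Suc (b + c)" using less_imp_Suc_add[OF True] by blast
          then show ?thesis using ij sD a b c by (simp add: W_def Idm_def)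
        next
          case False
          then show ?thesis using ij sD a b by (auto simp: W_def Idm_def)
        qed
      next
        case oj: False
        then show ?thesis using ij sD a by (auto simp: W_def Idm_def odd_pos)
      qed
    next
      case oi: False
      then obtain a where a: "i = 2 * a + 1" by (metis oddE)
      show "(if 0 < i then W D (i - 1) j else 0) + (if Suc i < D then W D (Suc i) j else 0) = Idm D i j"
      proof (cases "even j")
        case ej: True
        then show ?thesis using ij a by (auto simp: W_def Idm_def)
      next
        case oj: False
        then obtain b where b: "j = 2 * b + 1" by (metis oddE)
        show ?thesis
        proof (cases "a < b")
          case True
          then obtain c where c: "b = Suc (a + c)" using less_imp_Suc_add[OF True] by blast
          then show ?thesis using ij a b c by (auto simp: W_def Idm_def)
        next
          case False
          then show ?thesis using ij a b by (auto simp: W_def Idm_def)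
        qed
      qed
    qed
  qed
qed


definition tr :: "rm \<Rightarrow> rm" where "tr X = (\<lambda>i j. X j i)"

lemma tr_mm: "tr (mm D X Y) = mm D (tr Y) (tr X)"
  unfolding tr_def mm_def by (intro ext) (auto simp: mult.commute)

lemma tr_tr[simp]: "tr (tr X) = X" unfolding tr_def by simp

lemma tr_Ad[simp]: "tr (Ad D) = Ad D" unfolding tr_def Ad_def by (intro ext) auto
lemma tr_Idm[simp]: "tr (Idm D) = Idm D" unfolding tr_def Idm_def by (intro ext) auto
lemma tr_W[simp]: "tr (W D) = W D"
  unfolding tr_def W_def by (intro ext) (auto simp: add.commute)

lemma supp_tr[simp]: "supp D X \<Longrightarrow> supp D (tr X)" unfolding supp_def tr_def by auto

lemma pw_comm: "supp D X \<Longrightarrow> mm D X (pw D X t) = mm D (pw D X t) X"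
  using pw_Suc_left[of D X t] by simp

lemma tr_pw: "supp D X \<Longrightarrow> tr (pw D X t) = pw D (tr X) t"
  by (induction t) (simp_all add: tr_mm pw_comm)

lemma WA: assumes "even D" shows "mm D (W D) (Ad D) = Idm D"
proof -
  have "mm D (W D) (Ad D) = mm D (tr (W D)) (tr (Ad D))" by simp
  also have "\<dots> = tr (mm D (Ad D) (W D))" by (simp add: tr_mm)
  also have "\<dots> = Idm D" using AW[OF assms] by simp
  finally show ?thesis .
qed

lemma pw_W_sym: "pw D (W D) t i j = pw D (W D) t j i"
proof -
  have "tr (pw D (W D) t) = pw D (W D) t" using tr_pw[of D "W D" t] by simp
  then have "tr (pw D (W D) t) j i = pw D (W D) t j i" by simp
  then show ?thesis unfolding tr_def .
qed

lemma mm_lin_right: "mm D X (\<lambda>a b. \<Sum>i\<in>S. c i * Y i a b) = (\<lambda>a b. \<Sum>i\<in>S. c i * mm D X (Y i) a b)"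
proof (intro ext)
  fix a b
  show "mm D X (\<lambda>a b. \<Sum>i\<in>S. c i * Y i a b) a b = (\<Sum>i\<in>S. c i * mm D X (Y i) a b)"
    unfolding mm_def
    by (auto simp: sum_distrib_left sum_distrib_right intro: sum.swap[THEN trans] intro!: sum.cong
        simp: ac_simps)
qed


fun cc :: "nat \<Rightarrow> nat \<Rightarrow> real" where
  "cc 0 i = (if i = 0 then 1 else 0)"
| "cc (Suc 0) i = (if i = 1 then 1 else 0)"
| "cc (Suc (Suc j)) i = (if i = 0 then 0 else cc (Suc j) (i - 1)) - cc j i"

lemma cc_zero: "j < i \<Longrightarrow> cc j i = 0"
  by (induct j i rule: cc.induct) auto

lemma cc_diag: "cc j j = 1"
proof (induction j rule: nat_less_induct)
  case (1 n)
  show ?case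
  proof (cases n)
    case (Suc n')
    then show ?thesis using 1 by (cases n') (auto simp: cc_zero)
  qed simp
qed

lemma cc_0: "cc (2 * L) 0 = (-1) ^ L"
  by (induction L) (auto simp: numeral_2_eq_2)

lemma mm_lin_left: "mm D (\<lambda>a b. \<Sum>i\<in>S. c i * Y i a b) X = (\<lambda>a b. \<Sum>i\<in>S. c i * mm D (Y i) X a b)"
proof (intro ext)
  fix a b
  show "mm D (\<lambda>a b. \<Sum>i\<in>S. c i * Y i a b) X a b = (\<Sum>i\<in>S. c i * mm D (Y i) X a b)"
    unfolding mm_def
    by (auto simp: sum_distrib_left sum_distrib_right intro: sum.swap[THEN trans] intro!: sum.cong
        simp: ac_simps)
qed

definition E :: "nat \<Rightarrow> nat \<Rightarrow> rm" where
  "E D j = (\<lambda>a b. \<Sum>i<Suc j. cc j i * pw D (Ad D) i a b)"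

lemma supp_E[simp]: "supp D (E D j)"
  unfolding supp_def E_def using supp_pw[of D "Ad D"] unfolding supp_def by simp

lemma E_0: "E D 0 = Idm D" unfolding E_def by simp

lemma E_1: "E D (Suc 0) = Ad D" unfolding E_def by (simp add: mm_Idm_left)

lemma E_rec: "E D (Suc (Suc j)) = (\<lambda>a b. mm D (Ad D) (E D (Suc j)) a b - E D j a b)"
proof (intro ext)
  fix a b
  have 1: "mm D (Ad D) (E D (Suc j)) a b = (\<Sum>i<Suc (Suc j). cc (Suc j) i * pw D (Ad D) (Suc i) a b)"
    unfolding E_def mm_lin_right by (simp add: pw_comm)
  have 2: "(\<Sum>i<Suc (Suc (Suc j)). cc j i * pw D (Ad D) i a b) = (\<Sum>i<Suc j. cc j i * pw D (Ad D) i a b)"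
  proof -
    have "(\<Sum>i<Suc (Suc (Suc j)). cc j i * pw D (Ad D) i a b) = (\<Sum>i<Suc j. cc j i * pw D (Ad D) i a b)
      + cc j (Suc j) * pw D (Ad D) (Suc j) a b + cc j (Suc (Suc j)) * pw D (Ad D) (Suc (Suc j)) a b"
      by simp
    then show ?thesis by (simp add: cc_zero)
  qed
  have "E D (Suc (Suc j)) a b = (\<Sum>i<Suc (Suc (Suc j)). (if i = 0 then 0 else cc (Suc j) (i - 1)) * pw D (Ad D) i a b)
      - (\<Sum>i<Suc (Suc (Suc j)). cc j i * pw D (Ad D) i a b)"
    unfolding E_def by (simp add: left_diff_distrib sum_subtractf)
  also have "(\<Sum>i<Suc (Suc (Suc j)). (if i = 0 then 0 else cc (Suc j) (i - 1)) * pw D (Ad D) i a b)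
     = (\<Sum>i<Suc (Suc j). cc (Suc j) i * pw D (Ad D) (Suc i) a b)"
    by (subst sum.lessThan_Suc_shift) simp
  finally show "E D (Suc (Suc j)) a b = mm D (Ad D) (E D (Suc j)) a b - E D j a b"
    using 1 2 unfolding E_def by simp
qed

lemma E_col0: assumes "j < D" "a < D"
  shows "E D j a 0 = (if a = j then 1 else 0)"
proof -
  have "\<forall>a<D. E D j a 0 = (if a = j then 1 else 0) \<and> (Suc j < D \<longrightarrow> E D (Suc j) a 0 = (if a = Suc j then 1 else 0))"
    using assms(1)
  proof (induction j)
    case 0
    then show ?case by (auto simp: E_0 E_1 Idm_def Ad_def)
  next
    case (Suc j)
    show ?case
    proof (intro allI impI conjI)
      fix a assume a: "a < D"
      show "E D (Suc j) a 0 = (if a = Suc j then 1 else 0)" using Suc a by auto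
      assume sj: "Suc (Suc j) < D"
      have IH: "\<forall>a<D. E D j a 0 = (if a = j then 1 else 0) \<and> E D (Suc j) a 0 = (if a = Suc j then 1 else 0)"
        using Suc.IH sj by auto
      have h1: "0 < a \<Longrightarrow> E D (Suc j) (a - 1) 0 = (if a - 1 = Suc j then 1 else 0)" using IH a by auto
      have h2: "Suc a < D \<Longrightarrow> E D (Suc j) (Suc a) 0 = (if Suc a = Suc j then 1 else 0)" using IH by auto
      have h3: "E D j a 0 = (if a = j then 1 else 0)" using IH a by auto
      have "E D (Suc (Suc j)) a 0 = mm D (Ad D) (E D (Suc j)) a 0 - E D j a 0"
        by (simp add: E_rec)
      also have "\<dots> = (if 0 < a then E D (Suc j) (a - 1) 0 else 0) + (if Suc a < D then E D (Suc j) (Suc a) 0 else 0)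
          - E D j a 0"
        using a sj by (simp add: mm_Ad_left)
      also have "\<dots> = (if a = Suc (Suc j) then 1 else 0)"
        using h1 h2 h3 sj a by auto
      finally show "E D (Suc (Suc j)) a 0 = (if a = Suc (Suc j) then 1 else 0)" .
    qed
  qed
  then show ?thesis using assms by auto
qed

lemma E_D_col0: assumes "2 \<le> D" "a < D" shows "E D D a 0 = 0"
proof -
  obtain j where j: "D = Suc (Suc j)" using assms(1) by (metis add_2_eq_Suc le_Suc_ex)
  have "E D D a 0 = mm D (Ad D) (E D (Suc j)) a 0 - E D j a 0"
    unfolding j by (simp add: E_rec)
  also have "\<dots> = (if 0 < a then E D (Suc j) (a - 1) 0 else 0) + (if Suc a < D then E D (Suc j) (Suc a) 0 else 0)
          - E D j a 0"
    using assms by (simp add: mm_Ad_left)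
  also have "\<dots> = 0"
    using E_col0[of "Suc j" D] E_col0[of j D] assms j by auto
  finally show ?thesis .
qed

lemma E_comm: "mm D (E D x) (E D y) = mm D (E D y) (E D x)"
proof -
  have "mm D (E D x) (E D y) = (\<lambda>a b. \<Sum>i<Suc x. cc x i * (\<Sum>i'<Suc y. cc y i' * mm D (pw D (Ad D) i) (pw D (Ad D) i') a b))"
    unfolding E_def mm_lin_left mm_lin_right ..
  also have "\<dots> = (\<lambda>a b. \<Sum>i<Suc x. \<Sum>i'<Suc y. cc x i * cc y i' * mm D (pw D (Ad D) i) (pw D (Ad D) i') a b)"
    by (simp only: sum_distrib_left mult.assoc)
  also have "\<dots> = (\<lambda>a b. \<Sum>i'<Suc y. \<Sum>i<Suc x. cc x i * cc y i' * mm D (pw D (Ad D) i) (pw D (Ad D) i') a b)"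
    by (intro ext) (rule sum.swap)
  also have "\<dots> = (\<lambda>a b. \<Sum>i'<Suc y. \<Sum>i<Suc x. cc y i' * cc x i * mm D (pw D (Ad D) i') (pw D (Ad D) i) a b)"
    by (intro ext sum.cong refl) (metis pw_mm_comm mult.commute)
  also have "\<dots> = (\<lambda>a b. \<Sum>i'<Suc y. cc y i' * (\<Sum>i<Suc x. cc x i * mm D (pw D (Ad D) i') (pw D (Ad D) i) a b))"
    by (simp only: sum_distrib_left mult.assoc)
  also have "\<dots> = mm D (E D y) (E D x)"
    unfolding E_def mm_lin_left mm_lin_right ..
  finally show ?thesis .
qed

lemma E_D_zero: assumes "2 \<le> D" shows "E D D a b = 0"
proof (cases "a < D \<and> b < D")
  case True
  have "E D D a b = (\<Sum>l<D. E D D a l * E D b l 0)"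
    using True E_col0[of b D] by (simp add: if01_mult sum.delta' cong: if_cong)
  also have "\<dots> = mm D (E D D) (E D b) a 0" using True assms by (simp add: mm_def)
  also have "\<dots> = mm D (E D b) (E D D) a 0" by (simp add: E_comm)
  also have "\<dots> = 0" using True assms by (simp add: mm_def E_D_col0)
  finally show ?thesis .
next
  case False then show ?thesis using supp_E[of D D] unfolding supp_def by auto
qed


definition cw :: "nat \<Rightarrow> nat \<Rightarrow> real" where
  "cw D i = - cc D (Suc i) / cc D 0"

lemma W_poly: assumes "D = 2 * L" "1 \<le> L"
  shows "W D = (\<lambda>a b. \<Sum>i<D. cw D i * pw D (Ad D) i a b)"
proof -
  have ev: "even D" using assms by simp
  have D2: "2 \<le> D" using assms by simp
  have c0: "cc D 0 \<noteq> 0" using assms cc_0[of L] by simp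
  have "mm D (W D) (E D D) = (\<lambda>a b. \<Sum>i<Suc D. cc D i * mm D (W D) (pw D (Ad D) i) a b)"
    unfolding E_def mm_lin_right ..
  also have "\<dots> = (\<lambda>a b. cc D 0 * W D a b + (\<Sum>i<D. cc D (Suc i) * pw D (Ad D) i a b))"
  proof (intro ext)
    fix a b
    have "mm D (W D) (pw D (Ad D) (Suc i)) = pw D (Ad D) i" for i
    proof -
      have "mm D (W D) (pw D (Ad D) (Suc i)) = mm D (W D) (mm D (Ad D) (pw D (Ad D) i))"
        by (simp only: pw_Suc_left[OF supp_Ad])
      also have "\<dots> = mm D (mm D (W D) (Ad D)) (pw D (Ad D) i)" by (simp only: mm_assoc)
      also have "\<dots> = pw D (Ad D) i" by (simp add: WA[OF ev] mm_Idm_left)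
      finally show ?thesis .
    qed
    then show "(\<Sum>i<Suc D. cc D i * mm D (W D) (pw D (Ad D) i) a b) = cc D 0 * W D a b + (\<Sum>i<D. cc D (Suc i) * pw D (Ad D) i a b)"
      by (subst sum.lessThan_Suc_shift) (simp add: mm_Idm_right)
  qed
  finally have e: "mm D (W D) (E D D) = (\<lambda>a b. cc D 0 * W D a b + (\<Sum>i<D. cc D (Suc i) * pw D (Ad D) i a b))" .
  have "mm D (W D) (E D D) = (\<lambda>a b. 0)"
    unfolding mm_def using E_D_zero[OF D2] by (intro ext) simp
  then have z: "cc D 0 * W D a b + (\<Sum>i<D. cc D (Suc i) * pw D (Ad D) i a b) = 0" for a b
    using e by metis
  show ?thesis
  proof (intro ext)
    fix a b
    have "W D a b = - (\<Sum>i<D. cc D (Suc i) * pw D (Ad D) i a b) / cc D 0"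
      using z[of a b] c0 by (simp add: field_simps)
    also have "\<dots> = (\<Sum>i<D. cw D i * pw D (Ad D) i a b)"
      unfolding cw_def by (simp add: sum_divide_distrib sum_negf[symmetric])
    finally show "W D a b = (\<Sum>i<D. cw D i * pw D (Ad D) i a b)" .
  qed
qed

definition Apow :: "nat \<Rightarrow> int \<Rightarrow> rm" where
  "Apow D N = (if 0 \<le> N then pw D (Ad D) (nat N) else pw D (W D) (nat (- N)))"

lemma Apow_Ad: assumes "even D" shows "mm D (Apow D N) (Ad D) = Apow D (N + 1)"
proof (cases "0 \<le> N")
  case True
  then show ?thesis unfolding Apow_def by (simp add: nat_add_distrib)
next
  case False
  then have "0 < nat (- N)" by simp
  then obtain t where t: "nat (- N) = Suc t" using gr0_implies_Suc by blast
  have "mm D (pw D (W D) (Suc t)) (Ad D) = pw D (W D) t"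
    by (simp add: mm_assoc WA[OF assms] mm_Idm_right)
  moreover have "Apow D (N + 1) = pw D (W D) t"
  proof (cases t)
    case 0 then have "N + 1 = 0" using t by simp
    then show ?thesis using 0 unfolding Apow_def by simp
  next
    case (Suc t')
    have "nat (- (N + 1)) = t" using t by simp
    moreover have "\<not> 0 \<le> N + 1" using t Suc by simp
    ultimately show ?thesis unfolding Apow_def by (simp only: if_False)
  qed
  ultimately show ?thesis using False t unfolding Apow_def by simp
qed

lemma Apow_W: assumes "even D" shows "mm D (Apow D N) (W D) = Apow D (N - 1)"
proof (cases "0 < N")
  case False
  then have "nat (- (N - 1)) = Suc (nat (- N))" by simp
  then show ?thesis using False unfolding Apow_def by simp
next
  case True
  then have "0 < nat N" by simp
  then obtain t where t: "nat N = Suc t" using gr0_implies_Suc by blast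
  have "mm D (pw D (Ad D) (Suc t)) (W D) = pw D (Ad D) t"
    by (simp add: mm_assoc AW[OF assms] mm_Idm_right)
  moreover have "nat (N - 1) = t" using t by simp
  ultimately show ?thesis using True t unfolding Apow_def by simp
qed

lemma Apow_pw: assumes "even D" shows "mm D (Apow D N) (pw D (Ad D) i) = Apow D (N + int i)"
proof (induction i)
  case 0
  have "supp D (Apow D N)" unfolding Apow_def by simp
  then show ?case by (simp add: mm_Idm_right)
next
  case (Suc i)
  have "mm D (Apow D N) (pw D (Ad D) (Suc i)) = mm D (mm D (Apow D N) (pw D (Ad D) i)) (Ad D)"
    by (simp add: mm_assoc)
  also have "\<dots> = Apow D (N + int i + 1)" using Suc Apow_Ad[OF assms] by simp
  also have "N + int i + 1 = N + int (Suc i)" by simp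
  finally show ?case .
qed

lemma Apow_back: assumes "D = 2 * L" "1 \<le> L"
  shows "Apow D (N - 1) a b = (\<Sum>i<D. cw D i * Apow D (N + int i) a b)"
proof -
  have ev: "even D" using assms by simp
  have "Apow D (N - 1) a b = mm D (Apow D N) (W D) a b" by (simp add: Apow_W[OF ev])
  also have "\<dots> = (\<Sum>i<D. cw D i * mm D (Apow D N) (pw D (Ad D) i) a b)"
    unfolding W_poly[OF assms] mm_lin_right ..
  also have "\<dots> = (\<Sum>i<D. cw D i * Apow D (N + int i) a b)"
    by (simp add: Apow_pw[OF ev])
  finally show ?thesis .
qed


lemma qF_nth: "fps_nth (fps_of_poly q * Abs_fps (\<lambda>n. f (int n))) n = (\<Sum>i<Suc n. coeff q i * (f (int n - int i) :: real))"
  unfolding fps_mult_nth atLeast0AtMost lessThan_Suc_atMost[symmetric]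
  by (intro sum.cong refl) (simp add: of_nat_diff)

lemma neg_series:
  fixes f :: "int \<Rightarrow> real" and c :: "nat \<Rightarrow> real" and d :: nat and p q :: "real poly"
  assumes rec: "\<And>N. f (N - 1) = (\<Sum>i<d. c i * f (N + int i))"
    and q0: "poly q 0 \<noteq> 0" and deg: "degree p < degree q"
    and eq: "fps_of_poly q * Abs_fps (\<lambda>n. f (int n)) = fps_of_poly p"
  shows "- fps_of_poly (monom 1 (degree q - degree p) * reflect_poly p) / fps_of_poly (reflect_poly q)
       = Abs_fps (\<lambda>n. if n = 0 then 0 else f (- int n))"
proof -
  define dq where "dq = degree q"
  define dp where "dp = degree p"
  define g where "g N = (\<Sum>i<Suc dq. coeff q i * f (N - int i))" for N
  have pn: "coeff p n = (\<Sum>i<Suc n. coeff q i * f (int n - int i))" for n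
    using qF_nth[of q f n] eq by simp
  have g_big: "g (int n) = 0" if "dq \<le> n" for n
  proof -
    have "g (int n) = (\<Sum>i<Suc n. coeff q i * f (int n - int i))"
      unfolding g_def using that
      by (intro sum.mono_neutral_left) (auto simp: dq_def coeff_eq_0)
    also have "\<dots> = coeff p n" using pn by simp
    also have "\<dots> = 0" using that deg by (simp add: dq_def coeff_eq_0)
    finally show ?thesis .
  qed
  have g_rec: "g (N - 1) = (\<Sum>i<d. c i * g (N + int i))" for N
  proof -
    have "g (N - 1) = (\<Sum>j<Suc dq. coeff q j * (\<Sum>i<d. c i * f (N - int j + int i)))"
      unfolding g_def using rec[of "N - int j" for j] by (intro sum.cong refl) (simp add: algebra_simps)
    also have "\<dots> = (\<Sum>j<Suc dq. \<Sum>i<d. c i * (coeff q j * f (N + int i - int j)))"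
      by (simp add: sum_distrib_left algebra_simps)
    also have "\<dots> = (\<Sum>i<d. \<Sum>j<Suc dq. c i * (coeff q j * f (N + int i - int j)))"
      by (rule sum.swap)
    also have "\<dots> = (\<Sum>i<d. c i * g (N + int i))"
      unfolding g_def by (simp only: sum_distrib_left)
    finally show ?thesis .
  qed
  have g0: "g N = 0" for N
  proof -
    have "\<forall>N. int dq - int t \<le> N \<longrightarrow> g N = 0" for t
    proof (induction t)
      case 0
      show ?case
      proof (intro allI impI)
        fix N assume "int dq - int 0 \<le> N"
        then have "N = int (nat N)" "dq \<le> nat N" by auto
        then show "g N = 0" using g_big by metis
      qed
    next
      case (Suc t)
      show ?case
      proof (intro allI impI)
        fix N assume N: "int dq - int (Suc t) \<le> N"
        show "g N = 0"
        proof (cases "int dq - int t \<le> N")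
          case True then show ?thesis using Suc.IH by auto
        next
          case False
          have "g N = g ((N + 1) - 1)" by simp
          also have "\<dots> = (\<Sum>i<d. c i * g (N + 1 + int i))" by (rule g_rec)
          also have "\<dots> = 0" using Suc.IH N by (intro sum.neutral) auto
          finally show ?thesis .
        qed
      qed
    qed
    from this[of "nat (int dq - N)"] show ?thesis by auto
  qed
  define G where "G = Abs_fps (\<lambda>n. if n = 0 then 0 else f (- int n))"
  define Y where "Y = fps_of_poly (reflect_poly q)"
  define X where "X = fps_of_poly (monom 1 (dq - dp) * reflect_poly p)"
  have qnz: "q \<noteq> 0" using q0 by auto
  have Ynz: "Y \<noteq> 0"
  proof
    assume "Y = 0"
    then have "reflect_poly q = 0" unfolding Y_def by simp
    then show False using qnz by simp
  qed
  have YG: "Y * G = - X"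
  proof (rule fps_ext)
    fix M
    have lhs: "fps_nth (Y * G) M = (\<Sum>j<M. (if j \<le> dq then coeff q (dq - j) else 0) * f (int j - int M))"
    proof -
      have "fps_nth (Y * G) M = (\<Sum>j<Suc M. (if dq < j then 0 else coeff q (dq - j)) * (if M - j = 0 then 0 else f (- int (M - j))))"
        unfolding fps_mult_nth atLeast0AtMost lessThan_Suc_atMost[symmetric] Y_def G_def dq_def
        by (simp add: coeff_reflect_poly)
      also have "\<dots> = (\<Sum>j<M. (if j \<le> dq then coeff q (dq - j) else 0) * f (int j - int M))"
        unfolding dq_def by (simp add: of_nat_diff not_less) (intro sum.cong refl, auto)
      finally show ?thesis .
    qed
    have rhs: "fps_nth (- X) M = - (if M < dq - dp then 0 else if dq < M then 0 else coeff p (dq - M))"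
      unfolding X_def using deg by (auto simp: coeff_monom_mult coeff_reflect_poly dp_def dq_def)
    show "fps_nth (Y * G) M = fps_nth (- X) M"
    proof (cases "dq < M")
      case True
      have "(\<Sum>j<M. (if j \<le> dq then coeff q (dq - j) else 0) * f (int j - int M))
          = (\<Sum>j<Suc dq. (if j \<le> dq then coeff q (dq - j) else 0) * f (int j - int M))"
        using True by (intro sum.mono_neutral_right) auto
      also have "\<dots> = (\<Sum>i<Suc dq. (if dq - i \<le> dq then coeff q (dq - (dq - i)) else 0) * f (int (dq - i) - int M))"
        using sum.nat_diff_reindex[of "\<lambda>j. (if j \<le> dq then coeff q (dq - j) else 0) * f (int j - int M)" "Suc dq"]
        by simp
      also have "\<dots> = g (int dq - int M)"
        unfolding g_def by (intro sum.cong refl) (auto simp: of_nat_diff algebra_simps)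
      also have "\<dots> = 0" by (rule g0)
      finally show ?thesis using lhs rhs True by simp
    next
      case False
      define n where "n = dq - M"
      have Mn: "M + n = dq" using False n_def by simp
      have "0 = g (int n)" using g0 by simp
      also have "\<dots> = (\<Sum>i<Suc n. coeff q i * f (int n - int i)) + (\<Sum>i\<in>{Suc n..<Suc dq}. coeff q i * f (int n - int i))"
        unfolding g_def using Mn by (subst sum.atLeastLessThan_concat[of 0 "Suc n" "Suc dq", symmetric, simplified atLeast0LessThan]) auto
      also have "(\<Sum>i\<in>{Suc n..<Suc dq}. coeff q i * f (int n - int i)) = (\<Sum>j<M. (if j \<le> dq then coeff q (dq - j) else 0) * f (int j - int M))"
        by (rule sum.reindex_bij_witness[of _ "\<lambda>j. dq - j" "\<lambda>i. dq - i"]) (use Mn in \<open>auto simp: of_nat_diff\<close>)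
      finally have "fps_nth (Y * G) M = - coeff p n" using lhs pn[of n] by simp
      moreover have "coeff p n = (if M < dq - dp then 0 else if dq < M then 0 else coeff p (dq - M))"
        using False n_def by (auto simp: coeff_eq_0 dp_def)
      ultimately show ?thesis using rhs by simp
    qed
  qed
  have "- X / Y = G" using YG Ynz by (metis fps_divide_times_eq mult.commute)
  then show ?thesis unfolding X_def Y_def G_def dq_def dp_def .
qed


lemma coeff_sum_monom_lt: "coeff (\<Sum>i<D. monom (h i) i) n = (if n < D then h n else 0)"
  by (simp add: coeff_sum coeff_monom sum.delta' cong: if_cong)

lemma path_gf_Apow: assumes "D = Suc K" "u \<le> K" "v \<le> K"
  shows "path_gf K u v = Abs_fps (\<lambda>n. Apow D (int n) u v)"
  unfolding path_gf_def Apow_def using paths_pw[of u K v] assms by simp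

lemma rat_rep_exists: assumes "D = 2 * L" "1 \<le> L" "D = Suc K" "u \<le> K" "v \<le> K"
  shows "\<exists>pq. (case pq of (p, q) \<Rightarrow> poly q 0 \<noteq> 0 \<and> degree p < degree q \<and>
      fps_of_poly q * path_gf K u v = fps_of_poly p)"
proof -
  define F where "F = path_gf K u v"
  define q0 :: "real poly" where "q0 = (\<Sum>i<Suc D. monom (cc D (D - i)) i)"
  have cq: "coeff q0 i = (if i \<le> D then cc D (D - i) else 0)" for i
    unfolding q0_def coeff_sum_monom_lt by auto
  have c0: "cc D 0 \<noteq> 0" using assms cc_0[of L] by simp
  have dq: "degree q0 = D"
  proof (rule antisym)
    show "degree q0 \<le> D" by (rule degree_le) (auto simp: cq)
    show "D \<le> degree q0" by (rule le_degree) (simp add: cq c0)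
  qed
  have pq0: "poly q0 0 \<noteq> 0" by (simp add: poly_0_coeff_0 cq cc_diag)
  have ev: "even D" using assms by simp
  have big: "fps_nth (fps_of_poly q0 * F) n = 0" if "D \<le> n" for n
  proof -
    have "fps_nth (fps_of_poly q0 * F) n = (\<Sum>i<Suc n. coeff q0 i * Apow D (int n - int i) u v)"
      unfolding F_def path_gf_Apow[OF assms(3-5)] by (rule qF_nth)
    also have "\<dots> = (\<Sum>i<Suc D. cc D (D - i) * Apow D (int n - int i) u v)"
      using that by (intro sum.mono_neutral_cong_right) (auto simp: cq)
    also have "\<dots> = (\<Sum>j<Suc D. cc D j * Apow D (int n - int D + int j) u v)"
      using sum.nat_diff_reindex[of "\<lambda>j. cc D j * Apow D (int n - int D + int j) u v" "Suc D"]
      by (simp add: of_nat_diff algebra_simps)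
    also have "\<dots> = (\<Sum>j<Suc D. cc D j * mm D (Apow D (int n - int D)) (pw D (Ad D) j) u v)"
      by (simp add: Apow_pw[OF ev])
    also have "\<dots> = mm D (Apow D (int n - int D)) (E D D) u v"
      unfolding E_def mm_lin_right ..
    also have "\<dots> = 0" unfolding mm_def using E_D_zero[of D] assms by simp
    finally show ?thesis .
  qed
  define p0 :: "real poly" where "p0 = (\<Sum>i<D. monom (fps_nth (fps_of_poly q0 * F) i) i)"
  have "fps_of_poly p0 = fps_of_poly q0 * F"
    by (rule fps_ext) (auto simp: p0_def coeff_sum_monom_lt big)
  moreover have "degree p0 < degree q0"
  proof -
    have "degree p0 \<le> D - 1" by (rule degree_le) (auto simp: p0_def coeff_sum_monom_lt)
    then show ?thesis using dq assms by simp
  qed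
  ultimately show ?thesis using pq0 unfolding F_def by (intro exI[of _ "(p0, q0)"]) auto
qed

lemma neg_gf_W: assumes "D = 2 * L" "1 \<le> L" "D = Suc K" "u \<le> K" "v \<le> K" "0 < n"
  shows "fps_nth (neg_gf K u v) n = pw D (W D) n u v"
proof -
  obtain p q where pq: "rat_rep K u v = (p, q)" by (cases "rat_rep K u v")
  have "(case rat_rep K u v of (p, q) \<Rightarrow> poly q 0 \<noteq> 0 \<and> degree p < degree q \<and>
      fps_of_poly q * path_gf K u v = fps_of_poly p)"
    unfolding rat_rep_def using rat_rep_exists[OF assms(1-5)] by (rule someI_ex)
  then have h: "poly q 0 \<noteq> 0" "degree p < degree q" "fps_of_poly q * Abs_fps (\<lambda>n. Apow D (int n) u v) = fps_of_poly p"
    using pq path_gf_Apow[OF assms(3-5)] by auto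
  have "neg_gf K u v = Abs_fps (\<lambda>n. if n = 0 then 0 else Apow D (- int n) u v)"
    unfolding neg_gf_def pq using neg_series[OF _ h, of "cw D" D] Apow_back[OF assms(1,2)] by simp
  then show ?thesis using assms(6) by (simp add: Apow_def)
qed

lemma C_pos: assumes "D = Suc K" "u \<le> K" "v \<le> K" "0 \<le> N"
  shows "C K N u v = pw D (Ad D) (nat N) u v"
  unfolding C_def using assms paths_pw[of u K v] by simp

lemma C_neg: assumes "D = 2 * L" "1 \<le> L" "D = Suc K" "u \<le> K" "v \<le> K" "N < 0"
  shows "C K N u v = pw D (W D) (nat (- N)) u v"
  unfolding C_def using assms neg_gf_W[OF assms(1-5), of "nat (- N)"] by simp


lemma pw_Ad_parity: "odd (t + a + b) \<Longrightarrow> pw D (Ad D) t a b = 0"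
proof (induction t arbitrary: b)
  case 0 then show ?case by (auto simp: Idm_def)
next
  case (Suc t)
  show ?case
  proof (cases "a < D \<and> b < D")
    case True
    have "pw D (Ad D) (Suc t) a b = (if 0 < b then pw D (Ad D) t a (b - 1) else 0) + (if Suc b < D then pw D (Ad D) t a (Suc b) else 0)"
      using True by (simp add: mm_Ad_right)
    also have "\<dots> = 0" using Suc by (cases b) auto
    finally show ?thesis .
  next
    case False then show ?thesis by (auto simp: mm_def)
  qed
qed

lemma sum_even_odd: "(\<Sum>l<2 * (L::nat). h l) = (\<Sum>j<L. h (2 * j)) + (\<Sum>j<L. (h (2 * j + 1) :: real))"
  by (induction L) (auto simp: numeral_2_eq_2)

lemma sum_even_only: assumes "\<And>j. j < L \<Longrightarrow> h (2 * j + 1) = 0"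
  shows "(\<Sum>l<2 * (L::nat). h l) = (\<Sum>j<L. (h (2 * j) :: real))"
  using sum_even_odd[where L=L and h=h] assms by simp

lemma sum_odd_only: assumes "\<And>j. j < L \<Longrightarrow> h (2 * j) = 0"
  shows "(\<Sum>l<2 * (L::nat). h l) = (\<Sum>j<L. (h (2 * j + 1) :: real))"
  using sum_even_odd[where L=L and h=h] assms by simp

lemma pw_inv: assumes "even D" shows "mm D (pw D (Ad D) t) (pw D (W D) t) = Idm D"
proof (induction t)
  case 0 then show ?case by (simp add: mm_Idm_left)
next
  case (Suc t)
  have e: "pw D (W D) (Suc t) = mm D (W D) (pw D (W D) t)" by (rule pw_Suc_left) simp
  have "mm D (pw D (Ad D) (Suc t)) (pw D (W D) (Suc t)) = mm D (mm D (pw D (Ad D) t) (Ad D)) (mm D (W D) (pw D (W D) t))"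
    unfolding e by (simp only: pw.simps(2))
  also have "\<dots> = mm D (pw D (Ad D) t) (mm D (mm D (Ad D) (W D)) (pw D (W D) t))"
    by (simp only: mm_assoc)
  also have "\<dots> = Idm D" using Suc by (simp add: AW[OF assms] mm_Idm_left)
  finally show ?case .
qed

definition Bm :: "nat \<Rightarrow> nat \<Rightarrow> real mat" where
  "Bm L t = mat L L (\<lambda>(i, j). pw (2 * L) (Ad (2 * L)) t (2 * i) (2 * j + 1))"
definition Nm :: "nat \<Rightarrow> nat \<Rightarrow> real mat" where
  "Nm L t = mat L L (\<lambda>(i, j). pw (2 * L) (W (2 * L)) t (2 * i + 1) (2 * j))"
definition Be :: "nat \<Rightarrow> nat \<Rightarrow> real mat" where
  "Be L t = mat L L (\<lambda>(i, j). pw (2 * L) (Ad (2 * L)) t (2 * i) (2 * j))"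
definition M1 :: "nat \<Rightarrow> real mat" where
  "M1 L = mat L L (\<lambda>(i, j). Ad (2 * L) (2 * i) (2 * j + 1))"
definition T1 :: "nat \<Rightarrow> real mat" where
  "T1 L = mat L L (\<lambda>(i, j). Ad (2 * L) (2 * i + 1) (2 * j))"

lemma Bm_carrier[simp]: "Bm L t \<in> carrier_mat L L" by (simp add: Bm_def)
lemma Nm_carrier[simp]: "Nm L t \<in> carrier_mat L L" by (simp add: Nm_def)
lemma Be_carrier[simp]: "Be L t \<in> carrier_mat L L" by (simp add: Be_def)
lemma M1_carrier[simp]: "M1 L \<in> carrier_mat L L" by (simp add: M1_def)
lemma T1_carrier[simp]: "T1 L \<in> carrier_mat L L" by (simp add: T1_def)

lemma Bm_Nm: assumes "odd t" shows "Bm L t * Nm L t = 1\<^sub>m L"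
proof (rule eq_matI)
  fix i j assume ij: "i < dim_row (1\<^sub>m L :: real mat)" "j < dim_col (1\<^sub>m L :: real mat)"
  then have ij': "i < L" "j < L" by auto
  have "(Bm L t * Nm L t) $$ (i, j) = (\<Sum>l<L. pw (2 * L) (Ad (2 * L)) t (2 * i) (2 * l + 1) * pw (2 * L) (W (2 * L)) t (2 * l + 1) (2 * j))"
    using ij' by (simp add: Bm_def Nm_def scalar_prod_def row_def col_def atLeast0LessThan)
  also have "\<dots> = (\<Sum>l<2 * L. pw (2 * L) (Ad (2 * L)) t (2 * i) l * pw (2 * L) (W (2 * L)) t l (2 * j))"
    by (rule sum_odd_only[symmetric]) (simp add: pw_Ad_parity assms)
  also have "\<dots> = mm (2 * L) (pw (2 * L) (Ad (2 * L)) t) (pw (2 * L) (W (2 * L)) t) (2 * i) (2 * j)"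
    using ij' by (simp add: mm_def)
  also have "\<dots> = (if i = j then 1 else 0)" using ij' by (simp add: pw_inv Idm_def)
  finally show "(Bm L t * Nm L t) $$ (i, j) = 1\<^sub>m L $$ (i, j)" using ij' by simp
qed (auto simp: Bm_def Nm_def)

lemma Bm_Be: "Bm L (Suc (2 * s)) = Be L (2 * s) * M1 L"
proof (rule eq_matI)
  fix i j assume ij: "i < dim_row (Be L (2 * s) * M1 L)" "j < dim_col (Be L (2 * s) * M1 L)"
  then have ij': "i < L" "j < L" by (auto simp: Be_def M1_def)
  have "(Be L (2 * s) * M1 L) $$ (i, j) = (\<Sum>l<L. pw (2 * L) (Ad (2 * L)) (2 * s) (2 * i) (2 * l) * Ad (2 * L) (2 * l) (2 * j + 1))"
    using ij' by (simp add: Be_def M1_def scalar_prod_def row_def col_def atLeast0LessThan)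
  also have "\<dots> = (\<Sum>l<2 * L. pw (2 * L) (Ad (2 * L)) (2 * s) (2 * i) l * Ad (2 * L) l (2 * j + 1))"
    by (rule sum_even_only[symmetric]) (simp add: pw_Ad_parity del: pw.simps)
  also have "\<dots> = Bm L (Suc (2 * s)) $$ (i, j)" using ij' by (simp add: Bm_def mm_def)
  finally show "Bm L (Suc (2 * s)) $$ (i, j) = (Be L (2 * s) * M1 L) $$ (i, j)" by simp
qed (auto simp: Bm_def Be_def M1_def)

lemma Be_Bm: "Be L (Suc (Suc (2 * s))) = Bm L (Suc (2 * s)) * T1 L"
proof (rule eq_matI)
  fix i j assume ij: "i < dim_row (Bm L (Suc (2 * s)) * T1 L)" "j < dim_col (Bm L (Suc (2 * s)) * T1 L)"
  then have ij': "i < L" "j < L" by (auto simp: Bm_def T1_def)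
  have "(Bm L (Suc (2 * s)) * T1 L) $$ (i, j) = (\<Sum>l<L. pw (2 * L) (Ad (2 * L)) (Suc (2 * s)) (2 * i) (2 * l + 1) * Ad (2 * L) (2 * l + 1) (2 * j))"
    using ij' by (simp add: Bm_def T1_def scalar_prod_def row_def col_def atLeast0LessThan)
  also have "\<dots> = (\<Sum>l<2 * L. pw (2 * L) (Ad (2 * L)) (Suc (2 * s)) (2 * i) l * Ad (2 * L) l (2 * j))"
    by (rule sum_odd_only[symmetric]) (simp add: pw_Ad_parity del: pw.simps)
  also have "\<dots> = Be L (Suc (Suc (2 * s))) $$ (i, j)" using ij' by (simp add: Be_def mm_def)
  finally show "Be L (Suc (Suc (2 * s))) $$ (i, j) = (Bm L (Suc (2 * s)) * T1 L) $$ (i, j)" by simp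
qed (auto simp: Bm_def Be_def T1_def)

lemma det_M1: "det (M1 L) = 1"
proof -
  have "det (M1 L) = prod_list (diag_mat (M1 L))"
    by (rule det_lower_triangular[of L]) (auto simp: M1_def Ad_def)
  also have "\<dots> = 1" unfolding prod_list_diag_prod by (simp add: M1_def Ad_def)
  finally show ?thesis .
qed

lemma det_T1: "det (T1 L) = 1"
proof -
  have "det (T1 L) = prod_list (diag_mat (T1 L))"
    by (rule det_upper_triangular[of _ L]) (auto simp: T1_def Ad_def upper_triangular_def)
  also have "\<dots> = 1" unfolding prod_list_diag_prod by (simp add: T1_def Ad_def)
  finally show ?thesis .
qed

lemma Be_0: "Be L 0 = 1\<^sub>m L"
  by (rule eq_matI) (auto simp: Be_def Idm_def)

lemma det_Bm_Be: "det (Be L (2 * s)) = 1 \<and> det (Bm L (Suc (2 * s))) = 1"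
proof (induction s)
  case 0
  then show ?case using Bm_Be[of L 0] det_mult[of "Be L 0" L "M1 L"] by (simp add: Be_0 det_M1)
next
  case (Suc s)
  have e: "2 * Suc s = Suc (Suc (2 * s))" by simp
  have "det (Be L (2 * Suc s)) = 1"
    unfolding e Be_Bm using Suc det_mult[of "Bm L (Suc (2 * s))" L "T1 L"] by (simp add: det_T1)
  moreover then have "det (Bm L (Suc (2 * Suc s))) = 1"
    using Bm_Be[of L "Suc s"] det_mult[of "Be L (2 * Suc s)" L "M1 L"] by (simp add: det_M1)
  ultimately show ?case by simp
qed


lemma strict_mono_on_unique:
  fixes f g :: "nat \<Rightarrow> nat"
  assumes "strict_mono_on {..<m} f" "strict_mono_on {..<m} g" "f ` {..<m} = g ` {..<m}" "j < m"
  shows "f j = g j"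
proof -
  have sf: "sorted_wrt (<) (map f [0..<m])"
    using assms(1) unfolding sorted_wrt_iff_nth_less strict_mono_on_def by auto
  have sg: "sorted_wrt (<) (map g [0..<m])"
    using assms(2) unfolding sorted_wrt_iff_nth_less strict_mono_on_def by auto
  have "set (map f [0..<m]) = set (map g [0..<m])" using assms(3) by (simp add: atLeast0LessThan)
  then have "map f [0..<m] = map g [0..<m]" using strict_sorted_equal sf sg by metis
  then show ?thesis using assms(4) by (metis add_0 diff_zero length_upt nth_map nth_upt)
qed

lemma permutes_lam_id: "(\<lambda>a. a) permutes S" using permutes_id unfolding id_def .

definition cyc :: "nat \<Rightarrow> nat \<Rightarrow> nat \<Rightarrow> nat" where
  "cyc k x = (\<lambda>i. if i = k then x else if k < i \<and> i \<le> x then i - 1 else i)"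

lemma cyc_step: "k \<le> x \<Longrightarrow> cyc k (Suc x) = Transposition.transpose x (Suc x) \<circ> cyc k x"
  unfolding cyc_def by (intro ext) (auto simp: Transposition.transpose_def)

lemma cyc_id: "cyc k k = id" unfolding cyc_def by (intro ext) auto

lemma cyc_perm: assumes "k \<le> x" "x < n"
  shows "cyc k x permutes {0..<n} \<and> sign (cyc k x) = (-1) ^ (x - k)"
  using assms
proof (induction x rule: dec_induct)
  case base
  then show ?case by (simp add: cyc_id permutes_lam_id)
next
  case (step x)
  then have IH: "cyc k x permutes {0..<n}" "sign (cyc k x) = (-1) ^ (x - k)" by auto
  have t: "Transposition.transpose x (Suc x) permutes {0..<n}" using step by (intro permutes_swap_id) auto
  have "cyc k (Suc x) permutes {0..<n}" unfolding cyc_step[OF step(1)]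
    by (rule permutes_compose[OF IH(1) t])
  moreover have "sign (cyc k (Suc x)) = (-1) ^ (Suc x - k)"
    unfolding cyc_step[OF step(1)]
    using sign_compose[OF permutes_imp_permutation[OF _ t] permutes_imp_permutation[OF _ IH(1)]] IH(2) step(1)
    by (simp add: sign_swap_id Suc_diff_le)
  ultimately show ?case by simp
qed

primrec pm :: "(nat \<Rightarrow> nat) \<Rightarrow> nat \<Rightarrow> nat \<Rightarrow> nat" where
  "pm a 0 = id"
| "pm a (Suc k) = pm a k \<circ> cyc k (a k)"

lemma pm_props:
  assumes sm: "strict_mono_on {..<k} a" and rng: "a ` {..<k} \<subseteq> {..<n}" and kk: "k' \<le> k"
  shows "pm a k' permutes {0..<n} \<and> (\<forall>i<k'. pm a k' i = a i) \<and> strict_mono_on {k'..<n} (pm a k')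
    \<and> (\<forall>i. (k' = 0 \<or> a (k' - 1) < i) \<longrightarrow> pm a k' i = i) \<and> sign (pm a k') = (-1) ^ (\<Sum>i<k'. a i - i)"
  using kk
proof (induction k')
  case 0
  then show ?case by (auto simp: permutes_lam_id strict_mono_on_def)
next
  case (Suc k')
  then have IH: "pm a k' permutes {0..<n}" "\<forall>i<k'. pm a k' i = a i" "strict_mono_on {k'..<n} (pm a k')"
    "\<forall>i. (k' = 0 \<or> a (k' - 1) < i) \<longrightarrow> pm a k' i = i" "sign (pm a k') = (-1) ^ (\<Sum>i<k'. a i - i)"
    and k'k: "k' < k" by auto
  define x where "x = a k'"
  have ge: "i \<le> a i" if "i < k" for i
    using that
  proof (induction i)
    case (Suc i)
    then have "a i < a (Suc i)" using sm unfolding strict_mono_on_def by auto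
    then show ?case using Suc by auto
  qed simp
  have kx: "k' \<le> x" using ge k'k x_def by auto
  have xn: "x < n" using rng k'k x_def by auto
  have prev: "a (k' - 1) < x" if "k' \<noteq> 0" using that sm k'k x_def unfolding strict_mono_on_def by auto
  note cp = cyc_perm[OF kx xn]
  have P1: "pm a (Suc k') permutes {0..<n}" using permutes_compose[OF cp[THEN conjunct1] IH(1)] by (simp add: x_def)
  have P2: "\<forall>i<Suc k'. pm a (Suc k') i = a i"
  proof (intro allI impI)
    fix i assume "i < Suc k'"
    show "pm a (Suc k') i = a i"
    proof (cases "i = k'")
      case True
      then show ?thesis using IH(4) prev x_def by (cases "k' = 0") (auto simp: cyc_def)
    next
      case False
      then show ?thesis using IH(2) \<open>i < Suc k'\<close> by (auto simp: cyc_def)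
    qed
  qed
  have P3: "strict_mono_on {Suc k'..<n} (pm a (Suc k'))"
  proof (rule strict_mono_onI)
    fix i j assume ij: "i \<in> {Suc k'..<n}" "j \<in> {Suc k'..<n}" "i < j"
    have ci: "cyc k' x i \<in> {k'..<n}" "cyc k' x j \<in> {k'..<n}" using ij xn by (auto simp: cyc_def)
    have "cyc k' x i < cyc k' x j" using ij by (auto simp: cyc_def)
    then show "pm a (Suc k') i < pm a (Suc k') j"
      using IH(3) ci x_def unfolding strict_mono_on_def by auto
  qed
  have P4: "\<forall>i. (Suc k' = 0 \<or> a (Suc k' - 1) < i) \<longrightarrow> pm a (Suc k') i = i"
  proof (intro allI impI)
    fix i assume "Suc k' = 0 \<or> a (Suc k' - 1) < i"
    then have xi: "x < i" using x_def by simp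
    then have "cyc k' x i = i" using kx by (auto simp: cyc_def)
    moreover have "pm a k' i = i" using IH(4) prev xi by (cases "k' = 0") auto
    ultimately show "pm a (Suc k') i = i" using x_def by simp
  qed
  have P5: "sign (pm a (Suc k')) = (-1) ^ (\<Sum>i<Suc k'. a i - i)"
  proof -
    have "sign (pm a (Suc k')) = sign (pm a k') * sign (cyc k' x)"
      using sign_compose[OF permutes_imp_permutation[OF _ IH(1)] permutes_imp_permutation[OF _ cp[THEN conjunct1]]]
      by (simp add: x_def)
    also have "\<dots> = (-1) ^ (\<Sum>i<k'. a i - i) * (-1) ^ (a k' - k')" using IH(5) cp x_def by simp
    also have "\<dots> = (-1) ^ (\<Sum>i<Suc k'. a i - i)" by (simp add: power_add)
    finally show ?thesis .
  qed
  show ?case using P1 P2 P3 P4 P5 by blast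
qed

lemma pm_compl:
  assumes sm: "strict_mono_on {..<k} a" and rng: "a ` {..<k} \<subseteq> {..<k + m}"
    and smb: "strict_mono_on {..<m} ab" and ab: "ab ` {..<m} = {..<k + m} - a ` {..<k}" and j: "j < m"
  shows "pm a k (k + j) = ab j"
proof -
  note P = pm_props[OF sm rng le_refl]
  have perm: "pm a k permutes {0..<k+m}" using P by blast
  have pre: "\<forall>i<k. pm a k i = a i" using P by blast
  have mono: "strict_mono_on {k..<k+m} (pm a k)" using P by blast
  have bij: "bij_betw (pm a k) {0..<k+m} {0..<k+m}" using permutes_imp_bij[OF perm] .
  have img: "pm a k ` {..<k} = a ` {..<k}" using pre by auto
  have "pm a k ` {k..<k+m} = pm a k ` ({0..<k+m} - {..<k})" by (intro arg_cong[where f = "image _"]) auto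
  also have "\<dots> = pm a k ` {0..<k+m} - pm a k ` {..<k}"
    using bij_betw_imp_inj_on[OF bij] by (intro inj_on_image_set_diff) auto
  also have "\<dots> = {..<k+m} - a ` {..<k}" using bij img by (simp add: bij_betw_def atLeast0LessThan)
  finally have e: "(\<lambda>j. pm a k (k + j)) ` {..<m} = ab ` {..<m}"
    unfolding ab[symmetric]
  proof -
    assume h: "pm a k ` {k..<k + m} = ab ` {..<m}"
    have "(\<lambda>j. pm a k (k + j)) ` {..<m} = pm a k ` ((\<lambda>j. k + j) ` {..<m})" by (simp add: image_image)
    also have "(\<lambda>j. k + j) ` {..<m} = {k..<k+m}"
      using image_add_atLeastLessThan[of k 0 m] by (simp add: atLeast0LessThan add.commute)
    finally show ?thesis using h by simp
  qed
  have "strict_mono_on {..<m} (\<lambda>j. pm a k (k + j))"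
    using mono unfolding strict_mono_on_def by auto
  from strict_mono_on_unique[OF this smb e j] show ?thesis .
qed


lemma if01_mult_D3: "(if c then 1 else 0) * (x::real) = (if c then x else 0)"
  "x * (if c then 1 else 0) = (if c then x else 0)" by auto

lemma det_perm_rows_cols:
  fixes B :: "real mat"
  assumes B: "B \<in> carrier_mat n n" and P: "P permutes {0..<n}" and Q: "Q permutes {0..<n}"
  shows "det (mat n n (\<lambda>(i, j). B $$ (P i, Q j))) = signof P * signof Q * det B"
proof -
  define Cm where "Cm = mat n n (\<lambda>(i, j). B $$ (i, Q j))"
  have Cc: "Cm \<in> carrier_mat n n" by (simp add: Cm_def)
  have "transpose_mat Cm = mat n n (\<lambda>(i, j). transpose_mat B $$ (Q i, j))"
    by (rule eq_matI) (use B permutes_in_image[OF Q] in \<open>auto simp: Cm_def\<close>)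
  then have "det (transpose_mat Cm) = signof Q * det (transpose_mat B)"
    using det_permute_rows[of "transpose_mat B" n Q] B Q by simp
  then have dC: "det Cm = signof Q * det B" using det_transpose[OF Cc] det_transpose[OF B] by simp
  have "mat n n (\<lambda>(i, j). B $$ (P i, Q j)) = mat n n (\<lambda>(i, j). Cm $$ (P i, j))"
    by (rule eq_matI) (use permutes_in_image[OF P] in \<open>auto simp: Cm_def\<close>)
  then show ?thesis using det_permute_rows[OF Cc P] dC by simp
qed

lemma jacobi:
  fixes B N :: "real mat"
  assumes B: "B \<in> carrier_mat (k + m) (k + m)" and N: "N \<in> carrier_mat (k + m) (k + m)"
    and BN: "B * N = 1\<^sub>m (k + m)"
    and P: "P permutes {0..<k + m}" and Q: "Q permutes {0..<k + m}"
  shows "det (mat k k (\<lambda>(i, j). B $$ (P i, Q j))) =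
     signof P * signof Q * det B * det (mat m m (\<lambda>(i, j). N $$ (Q (k + i), P (k + j))))"
proof -
  let ?L = "k + m"
  define B' where "B' = mat ?L ?L (\<lambda>(i, j). B $$ (P i, Q j))"
  define N' where "N' = mat ?L ?L (\<lambda>(i, j). N $$ (Q i, P j))"
  have B'c: "B' \<in> carrier_mat ?L ?L" and N'c: "N' \<in> carrier_mat ?L ?L" by (auto simp: B'_def N'_def)
  have dB': "det B' = signof P * signof Q * det B" unfolding B'_def by (rule det_perm_rows_cols[OF B P Q])
  have PL: "P i < ?L" if "i < ?L" for i using permutes_in_image[OF P] that by auto
  have QL: "Q i < ?L" if "i < ?L" for i using permutes_in_image[OF Q] that by auto
  have B'N': "B' * N' = 1\<^sub>m ?L"
  proof (rule eq_matI)
    fix i j assume ij: "i < dim_row (1\<^sub>m ?L :: real mat)" "j < dim_col (1\<^sub>m ?L :: real mat)"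
    then have ij': "i < ?L" "j < ?L" by auto
    have "(B' * N') $$ (i, j) = (\<Sum>l\<in>{0..<?L}. B $$ (P i, Q l) * N $$ (Q l, P j))"
      using ij' QL by (simp add: B'_def N'_def scalar_prod_def)
    also have "\<dots> = (\<Sum>l\<in>{0..<?L}. B $$ (P i, l) * N $$ (l, P j))"
      using sum.permute[OF Q, of "\<lambda>l. B $$ (P i, l) * N $$ (l, P j)"] by (simp add: comp_def)
    also have "\<dots> = (B * N) $$ (P i, P j)"
      using B N PL ij' by (simp add: scalar_prod_def)
    also have "\<dots> = (if i = j then 1 else 0)"
      using BN PL ij' permutes_inj[OF P] by (auto simp: inj_eq)
    finally show "(B' * N') $$ (i, j) = 1\<^sub>m ?L $$ (i, j)" using ij' by simp
  qed (auto simp: B'_def N'_def)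
  define B11 where "B11 = mat k k (\<lambda>(i, j). B $$ (P i, Q j))"
  define N22 where "N22 = mat m m (\<lambda>(i, j). N $$ (Q (k + i), P (k + j)))"
  define X where "X = four_block_mat (1\<^sub>m k) (mat k m (\<lambda>(i, j). N' $$ (i, k + j))) (0\<^sub>m m k) N22"
  define Y where "Y = four_block_mat B11 (0\<^sub>m k m) (mat m k (\<lambda>(i, j). B' $$ (k + i, j))) (1\<^sub>m m)"
  have Xc: "X \<in> carrier_mat ?L ?L" by (simp add: X_def N22_def)
  have Yc: "Y \<in> carrier_mat ?L ?L" by (simp add: Y_def B11_def)
  have dX: "det X = det N22" unfolding X_def
    by (subst det_four_block_mat_lower_left_zero) (auto simp: N22_def)
  have dY: "det Y = det B11" unfolding Y_def
    by (subst det_four_block_mat_upper_right_zero) (auto simp: B11_def)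
  have XN': "X $$ (l, j) = (if j < k then (if l = j then 1 else 0) else N' $$ (l, j))" if "l < ?L" "j < ?L" for l j
    using that by (auto simp: X_def N22_def N'_def)
  have BXY: "B' * X = Y"
  proof (rule eq_matI)
    fix i j assume ij: "i < dim_row Y" "j < dim_col Y"
    then have ij': "i < ?L" "j < ?L" using Yc by auto
    show "(B' * X) $$ (i, j) = Y $$ (i, j)"
    proof (cases "j < k")
      case True
      have "(B' * X) $$ (i, j) = (\<Sum>l\<in>{0..<?L}. B' $$ (i, l) * (if l = j then 1 else 0))"
        using ij' Xc B'c True XN' by (simp add: scalar_prod_def)
      also have "\<dots> = B' $$ (i, j)" using ij' by (simp add: if01_mult_D3 sum.delta' cong: if_cong)
      finally show ?thesis using ij' True by (auto simp: Y_def B11_def B'_def)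
    next
      case False
      have "(B' * X) $$ (i, j) = (\<Sum>l\<in>{0..<?L}. B' $$ (i, l) * N' $$ (l, j))"
        using ij' Xc B'c False XN' by (simp add: scalar_prod_def)
      also have "\<dots> = (B' * N') $$ (i, j)" using ij' B'c N'c by (simp add: scalar_prod_def)
      also have "\<dots> = (if i = j then 1 else 0)" using B'N' ij' by simp
      finally show ?thesis using ij' False by (auto simp: Y_def B11_def)
    qed
  qed (use B'c Xc Yc in auto)
  have "det B' * det X = det Y" using det_mult[OF B'c Xc] BXY by simp
  then show ?thesis using dB' dX dY unfolding B11_def N22_def by simp
qed


lemma shift_data:
  fixes k m :: nat and r rb :: "nat \<Rightarrow> nat"
  assumes sm: "strict_mono_on {..<k} r" and rr: "r ` {..<k} \<subseteq> {1..k+m}"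
    and smb: "strict_mono_on {..<m} rb" and rbe: "rb ` {..<m} = {1..k+m} - r ` {..<k}"
  shows "strict_mono_on {..<k} (\<lambda>i. r i - 1)" "(\<lambda>i. r i - 1) ` {..<k} \<subseteq> {..<k+m}"
    "strict_mono_on {..<m} (\<lambda>i. rb i - 1)"
    "(\<lambda>i. rb i - 1) ` {..<m} = {..<k+m} - (\<lambda>i. r i - 1) ` {..<k}"
    "\<And>j. j < m \<Longrightarrow> 1 \<le> rb j \<and> rb j \<le> k + m"
proof -
  have r1: "1 \<le> r i" "r i \<le> k + m" if "i < k" for i using rr that by auto
  have rb1: "1 \<le> rb j" "rb j \<le> k + m" if "j < m" for j using rbe that by auto
  show "strict_mono_on {..<k} (\<lambda>i. r i - 1)"
  proof (rule strict_mono_onI)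
    fix i j assume ij: "i \<in> {..<k}" "j \<in> {..<k}" "i < j"
    then have "r i < r j" using sm by (auto simp: strict_mono_on_def)
    moreover have "1 \<le> r i" using r1 ij by auto
    ultimately show "r i - 1 < r j - 1" by (rule diff_less_mono)
  qed
  show "(\<lambda>i. r i - 1) ` {..<k} \<subseteq> {..<k+m}" using r1 by force
  show "strict_mono_on {..<m} (\<lambda>i. rb i - 1)"
  proof (rule strict_mono_onI)
    fix i j assume ij: "i \<in> {..<m}" "j \<in> {..<m}" "i < j"
    then have "rb i < rb j" using smb by (auto simp: strict_mono_on_def)
    moreover have "1 \<le> rb i" using rb1 ij by auto
    ultimately show "rb i - 1 < rb j - 1" by (rule diff_less_mono)
  qed
  show "\<And>j. j < m \<Longrightarrow> 1 \<le> rb j \<and> rb j \<le> k + m" using rb1 by auto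
  show "(\<lambda>i. rb i - 1) ` {..<m} = {..<k+m} - (\<lambda>i. r i - 1) ` {..<k}"
  proof (intro equalityI subsetI)
    fix x assume "x \<in> (\<lambda>i. rb i - 1) ` {..<m}"
    then obtain j where j: "j < m" "x = rb j - 1" by auto
    have sx: "Suc x = rb j" using j rb1[of j] by auto
    have rbj: "rb j \<in> {1..k+m}" "rb j \<notin> r ` {..<k}" using rbe j by auto
    show "x \<in> {..<k+m} - (\<lambda>i. r i - 1) ` {..<k}"
    proof
      show "x \<in> {..<k+m}" using sx rbj by auto
      show "x \<notin> (\<lambda>i. r i - 1) ` {..<k}"
      proof
        assume "x \<in> (\<lambda>i. r i - 1) ` {..<k}"
        then obtain i where i: "i < k" "x = r i - 1" by auto
        then have "Suc x = r i" using r1[of i] by auto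
        then have "rb j = r i" using sx by simp
        then have "rb j \<in> r ` {..<k}" using i(1) by auto
        then show False using rbj(2) by contradiction
      qed
    qed
  next
    fix x assume x: "x \<in> {..<k+m} - (\<lambda>i. r i - 1) ` {..<k}"
    then have "Suc x \<in> {1..k+m}" by auto
    moreover have "Suc x \<notin> r ` {..<k}"
    proof
      assume "Suc x \<in> r ` {..<k}"
      then obtain i where i: "i < k" "Suc x = r i" by auto
      then have "x = r i - 1" by simp
      then have "x \<in> (\<lambda>i. r i - 1) ` {..<k}" using i(1) by auto
      then show False using x by auto
    qed
    ultimately have "Suc x \<in> rb ` {..<m}" using rbe by auto
    then obtain j where j: "j < m" "Suc x = rb j" by auto
    then have "x = rb j - 1" by simp
    then show "x \<in> (\<lambda>i. rb i - 1) ` {..<m}" using j(1) by auto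
  qed
qed

lemma sum_part:
  fixes a ab :: "nat \<Rightarrow> nat"
  assumes sm: "strict_mono_on {..<k} a" and rng: "a ` {..<k} \<subseteq> {..<k + m}"
    and smb: "strict_mono_on {..<m} ab" and ab: "ab ` {..<m} = {..<k + m} - a ` {..<k}"
  shows "(\<Sum>i<k. a i - i) + (\<Sum>i<k. i) + (\<Sum>j<m. ab j) = (\<Sum>x<k+m. x)"
proof -
  have ge: "i \<le> a i" if "i < k" for i
    using that
  proof (induction i)
    case (Suc i)
    then have "a i < a (Suc i)" using sm unfolding strict_mono_on_def by auto
    then show ?case using Suc by auto
  qed simp
  have "(\<Sum>i<k. a i - i) + (\<Sum>i<k. i) = (\<Sum>i<k. a i)"
    unfolding sum.distrib[symmetric] using ge by (intro sum.cong) auto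
  moreover have "(\<Sum>i<k. a i) = sum (\<lambda>x. x) (a ` {..<k})"
    using sum.reindex[OF strict_mono_on_imp_inj_on[OF sm], of "\<lambda>x. x"] by simp
  moreover have "(\<Sum>j<m. ab j) = sum (\<lambda>x. x) (ab ` {..<m})"
    using sum.reindex[OF strict_mono_on_imp_inj_on[OF smb], of "\<lambda>x. x"] by simp
  moreover have "sum (\<lambda>x. x) (a ` {..<k}) + sum (\<lambda>x. x) (ab ` {..<m}) = (\<Sum>x<k+m. x)"
  proof -
    have "{..<k+m} = a ` {..<k} \<union> ab ` {..<m}" using ab rng by auto
    moreover have "a ` {..<k} \<inter> ab ` {..<m} = {}" using ab by auto
    ultimately show ?thesis by (simp add: sum.union_disjoint[symmetric])
  qed
  ultimately show ?thesis by simp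
qed


lemma even_from: "(x::nat) + 2 * z = 2 * w + 2 * y \<Longrightarrow> even x" by presburger

theorem theorem24:
  fixes n k m :: nat and r s rb sb :: "nat \<Rightarrow> nat"
  assumes "n \<ge> 1" "k \<ge> 1" "m \<ge> 1"
    and "strict_mono_on {..<k} r" "r ` {..<k} \<subseteq> {1..k+m}"
    and "strict_mono_on {..<k} s" "s ` {..<k} \<subseteq> {1..k+m}"
    and "strict_mono_on {..<m} rb" "rb ` {..<m} = {1..k+m} - r ` {..<k}"
    and "strict_mono_on {..<m} sb" "sb ` {..<m} = {1..k+m} - s ` {..<k}"
  shows "det (mat k k (\<lambda>(i, j). C (2*k+2*m-1) (2*int n - 1) (2 * r i - 2) (2 * s j - 1)))
       = (-1) ^ (\<Sum>i<m. rb i + sb i) *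
         det (mat m m (\<lambda>(i, j). C (2*k+2*m-1) (- 2*int n + 1) (2 * rb i - 2) (2 * sb j - 1)))"
proof -
  define L where "L = k + m"
  define D where "D = 2 * L"
  define K where "K = 2*k+2*m-1"
  define t where "t = Suc (2 * (n - 1))"
  have DK: "D = Suc K" using assms unfolding D_def K_def L_def by simp
  have L1: "1 \<le> L" using assms unfolding L_def by simp
  have DL: "D = 2 * L" unfolding D_def ..
  have t_odd: "odd t" unfolding t_def by simp
  define a where "a i = r i - 1" for i
  define b where "b i = s i - 1" for i
  define ab where "ab i = rb i - 1" for i
  define bb where "bb i = sb i - 1" for i
  note ra = shift_data[OF assms(4,5,8,9)]
  note sb' = shift_data[OF assms(6,7,10,11)]
  have a1: "strict_mono_on {..<k} a" "a ` {..<k} \<subseteq> {..<k+m}" "strict_mono_on {..<m} ab"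
    "ab ` {..<m} = {..<k+m} - a ` {..<k}"
    using ra unfolding a_def[abs_def] ab_def[abs_def] by auto
  have b1: "strict_mono_on {..<k} b" "b ` {..<k} \<subseteq> {..<k+m}" "strict_mono_on {..<m} bb"
    "bb ` {..<m} = {..<k+m} - b ` {..<k}"
    using sb' unfolding b_def[abs_def] bb_def[abs_def] by auto
  have r1: "1 \<le> r i \<and> r i \<le> k + m" if "i < k" for i using assms(5) that by auto
  have s1: "1 \<le> s i \<and> s i \<le> k + m" if "i < k" for i using assms(7) that by auto
  have rb1: "1 \<le> rb j \<and> rb j \<le> k + m" if "j < m" for j using ra(5) that by auto
  have sb1: "1 \<le> sb j \<and> sb j \<le> k + m" if "j < m" for j using sb'(5) that by auto
  define P where "P = pm a k"
  define Q where "Q = pm b k"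
  note Pp = pm_props[OF a1(1,2) le_refl]
  note Qp = pm_props[OF b1(1,2) le_refl]
  have Pperm: "P permutes {0..<k+m}" and Pa: "\<And>i. i < k \<Longrightarrow> P i = a i"
    and Psign: "sign P = (-1) ^ (\<Sum>i<k. a i - i)" using Pp unfolding P_def by auto
  have Qperm: "Q permutes {0..<k+m}" and Qb: "\<And>i. i < k \<Longrightarrow> Q i = b i"
    and Qsign: "sign Q = (-1) ^ (\<Sum>i<k. b i - i)" using Qp unfolding Q_def by auto
  have Pab: "P (k + j) = ab j" if "j < m" for j unfolding P_def using pm_compl[OF a1 that] .
  have Qbb: "Q (k + j) = bb j" if "j < m" for j unfolding Q_def using pm_compl[OF b1 that] .
  have BmL: "Bm L t \<in> carrier_mat (k + m) (k + m)" "Nm L t \<in> carrier_mat (k + m) (k + m)"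
    unfolding L_def by auto
  have BN: "Bm L t * Nm L t = 1\<^sub>m (k + m)" using Bm_Nm[OF t_odd, of L] unfolding L_def by simp
  note J = jacobi[OF BmL BN Pperm Qperm]
  have detB: "det (Bm L t) = 1" using det_Bm_Be[of L "n - 1"] unfolding t_def by simp
  have lhs: "mat k k (\<lambda>(i, j). C K (2*int n - 1) (2 * r i - 2) (2 * s j - 1))
      = mat k k (\<lambda>(i, j). Bm L t $$ (P i, Q j))"
  proof (rule eq_matI)
    fix i j assume ij: "i < dim_row (mat k k (\<lambda>(i, j). Bm L t $$ (P i, Q j)))"
      "j < dim_col (mat k k (\<lambda>(i, j). Bm L t $$ (P i, Q j)))"
    then have ij': "i < k" "j < k" by auto
    have e1: "2 * r i - 2 = 2 * a i" "2 * s j - 1 = 2 * b j + 1" using r1[OF ij'(1)] s1[OF ij'(2)]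
      unfolding a_def b_def by auto
    have "C K (2*int n - 1) (2 * r i - 2) (2 * s j - 1) = pw D (Ad D) (nat (2*int n - 1)) (2 * a i) (2 * b j + 1)"
    proof -
      have le: "2 * a i \<le> K" "2 * b j + 1 \<le> K" using r1[OF ij'(1)] s1[OF ij'(2)] unfolding a_def b_def K_def by auto
      show ?thesis unfolding e1 by (rule C_pos[OF DK le]) (use assms(1) in simp)
    qed
    also have "nat (2*int n - 1) = t" unfolding t_def using assms(1) by simp
    also have "pw D (Ad D) t (2 * a i) (2 * b j + 1) = Bm L t $$ (a i, b j)"
    proof -
      have "a i < k + m" "b j < k + m" using a1(2) b1(2) ij' by auto
      then show ?thesis unfolding Bm_def D_def L_def by simp
    qed
    finally show "mat k k (\<lambda>(i, j). C K (2*int n - 1) (2 * r i - 2) (2 * s j - 1)) $$ (i, j)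
      = mat k k (\<lambda>(i, j). Bm L t $$ (P i, Q j)) $$ (i, j)" using ij' Pa Qb by simp
  qed auto
  have rhs: "mat m m (\<lambda>(i, j). C K (- 2*int n + 1) (2 * rb i - 2) (2 * sb j - 1))
      = transpose_mat (mat m m (\<lambda>(i, j). Nm L t $$ (Q (k + i), P (k + j))))"
  proof (rule eq_matI)
    fix i j assume ij: "i < dim_row (transpose_mat (mat m m (\<lambda>(i, j). Nm L t $$ (Q (k + i), P (k + j)))))"
      "j < dim_col (transpose_mat (mat m m (\<lambda>(i, j). Nm L t $$ (Q (k + i), P (k + j)))))"
    then have ij': "i < m" "j < m" by auto
    have e1: "2 * rb i - 2 = 2 * ab i" "2 * sb j - 1 = 2 * bb j + 1" using rb1[OF ij'(1)] sb1[OF ij'(2)]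
      unfolding ab_def bb_def by auto
    have abL: "ab i < L" "bb j < L" using a1(4) b1(4) ij' unfolding L_def by auto
    have "C K (- 2*int n + 1) (2 * rb i - 2) (2 * sb j - 1) = pw D (W D) (nat (- (- 2*int n + 1))) (2 * ab i) (2 * bb j + 1)"
    proof -
      have le: "2 * ab i \<le> K" "2 * bb j + 1 \<le> K" using abL unfolding K_def L_def by auto
      show ?thesis unfolding e1 by (rule C_neg[OF DL L1 DK le]) (use assms(1) in simp)
    qed
    also have "nat (- (- 2*int n + 1)) = t" unfolding t_def using assms(1) by simp
    also have "pw D (W D) t (2 * ab i) (2 * bb j + 1) = pw D (W D) t (2 * bb j + 1) (2 * ab i)"
      by (rule pw_W_sym)
    also have "\<dots> = Nm L t $$ (bb j, ab i)" using abL unfolding Nm_def D_def by simp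
    finally show "mat m m (\<lambda>(i, j). C K (- 2*int n + 1) (2 * rb i - 2) (2 * sb j - 1)) $$ (i, j) =
      transpose_mat (mat m m (\<lambda>(i, j). Nm L t $$ (Q (k + i), P (k + j)))) $$ (i, j)"
      using ij' Pab Qbb by simp
  qed auto
  have sgn: "signof P * signof Q = ((-1) ^ (\<Sum>i<m. rb i + sb i) :: real)"
  proof -
    have sa: "(\<Sum>i<k. a i - i) + (\<Sum>i<k. i) + (\<Sum>j<m. ab j) = (\<Sum>x<k+m. x)" by (rule sum_part[OF a1])
    have sb2: "(\<Sum>i<k. b i - i) + (\<Sum>i<k. i) + (\<Sum>j<m. bb j) = (\<Sum>x<k+m. x)" by (rule sum_part[OF b1])
    have sr: "(\<Sum>i<m. rb i + sb i) = (\<Sum>j<m. ab j) + (\<Sum>j<m. bb j) + 2 * m"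
    proof -
      have "(\<Sum>i<m. rb i + sb i) = (\<Sum>i<m. ab i + bb i + 2)"
      proof (intro sum.cong refl)
        fix x assume "x \<in> {..<m}"
        then have "1 \<le> rb x" "1 \<le> sb x" using rb1 sb1 by auto
        then show "rb x + sb x = ab x + bb x + 2" unfolding ab_def bb_def by simp
      qed
      also have "\<dots> = (\<Sum>j<m. ab j) + (\<Sum>j<m. bb j) + (\<Sum>i<m. 2)"
        by (simp only: sum.distrib)
      finally show ?thesis by simp
    qed
    have "even ((\<Sum>i<k. a i - i) + (\<Sum>i<k. b i - i) + (\<Sum>i<m. rb i + sb i))"
    proof -
      have "(\<Sum>i<k. a i - i) + (\<Sum>i<k. b i - i) + (\<Sum>i<m. rb i + sb i) + 2 * (\<Sum>i<k. i)
          = 2 * (\<Sum>x<k+m. x) + 2 * m" using sa sb2 sr by linarith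
      then show ?thesis by (rule even_from)
    qed
    then have "((-1::real) ^ ((\<Sum>i<k. a i - i) + (\<Sum>i<k. b i - i))) = (-1) ^ (\<Sum>i<m. rb i + sb i)"
      by (simp add: minus_one_power_iff)
    then show ?thesis using Psign Qsign by (simp add: power_add)
  qed
  have "det (mat k k (\<lambda>(i, j). C K (2*int n - 1) (2 * r i - 2) (2 * s j - 1)))
      = signof P * signof Q * det (mat m m (\<lambda>(i, j). Nm L t $$ (Q (k + i), P (k + j))))"
    unfolding lhs J detB by simp
  also have "det (mat m m (\<lambda>(i, j). Nm L t $$ (Q (k + i), P (k + j))))
      = det (mat m m (\<lambda>(i, j). C K (- 2*int n + 1) (2 * rb i - 2) (2 * sb j - 1)))"
    unfolding rhs by (rule det_transpose[of _ m, symmetric]) simp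
  finally show ?thesis unfolding sgn K_def .
qed


end
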